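(* Let $N\ge2$ and let $X_1,\dots,X_N$ be non-negative random variables. Suppose there are constants $\Theta_1>0$, $\Theta_2>0$ such that $\mathbb E[X_i^p]\le p^p\Theta_1^p+\Theta_2^p$ for all integers $p\ge1$ and all $i\in\{1,\dots,N\}$. Then for any $p\ge1$, $$\mathbb E\max_{i\in\{1,\dots,N\}}X_i^p\le\big(p^p+\log(N)^p+\Theta_2^p\Theta_1^{-p}\big)(24e\Theta_1)^p.$$ *)

theory Defs
  imports "HOL-Probability.Probability"
begin

end

theory Submission
  imports Defs
begin

lemma pow_add_ge:
  fixes a b :: real
  assumes "a \<ge> 0" "b \<ge> 0" "n \<ge> 1"
  shows "a ^ n + b ^ n \<le> (a + b) ^ n"
  using assms(3)
proof (induction n rule: dec_induct)
  case base then show ?case by simp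
next
  case (step n)
  have "a ^ Suc n + b ^ Suc n \<le> (a + b) * (a ^ n + b ^ n)"
    using assms by (simp add: algebra_simps)
  also have "\<dots> \<le> (a + b) * (a + b) ^ n"
    using step.IH assms by (intro mult_left_mono) auto
  finally show ?case by simp
qed

lemma pw:
  fixes x C p :: real and q :: nat
  assumes "x \<ge> 0" "C > 0" "1 \<le> p" "p \<le> real q"
  shows "x powr p \<le> C powr p + C powr (p - q) * x ^ q"
proof (cases "x \<le> C")
  case True
  then have "x powr p \<le> C powr p" using assms by (intro powr_mono2) auto
  moreover have "C powr (p - q) * x ^ q \<ge> 0" using assms by simp
  ultimately show ?thesis by linarith
next
  case False
  then have x0: "x > 0" "x / C \<ge> 1" using assms by auto
  have "x powr p = C powr p * (x / C) powr p"
    using assms x0 by (simp add: powr_divide)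
  also have "\<dots> \<le> C powr p * (x / C) powr q"
    using x0 assms by (intro mult_left_mono powr_mono) auto
  also have "\<dots> = C powr (p - q) * x powr q"
    using assms x0 by (simp add: powr_divide powr_diff)
  also have "\<dots> = C powr (p - q) * x ^ q"
    using x0 by (simp add: powr_realpow)
  finally have "x powr p \<le> C powr (p - q) * x ^ q" .
  moreover have "C powr p \<ge> 0" by simp
  ultimately show ?thesis by linarith
qed

lemma final:
  fixes T1 T2 p L N :: real and q :: nat
  assumes T: "T1 > 0" "T2 > 0" and p: "p \<ge> 1" and L: "L \<ge> 0"
    and q: "real q \<ge> p" "real q \<le> max p L + 1" and N: "N \<ge> 0" "N \<le> exp (real q)"
  defines "C \<equiv> exp 1 * (real q * T1 + T2)"
  shows "C powr p + C powr (p - q) * (N * (real q ^ q * T1 ^ q + T2 ^ q))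
     \<le> (p powr p + L powr p + T2 powr p * T1 powr (-p)) * (24 * exp 1 * T1) powr p"
proof -
  define B where "B = real q * T1 + T2"
  have B0: "B > 0" using T by (simp add: B_def add_nonneg_pos)
  have C0: "C > 0" using B0 by (simp add: C_def B_def[symmetric])
  have q1: "q \<ge> 1" using q p by linarith
  have "real q ^ q * T1 ^ q + T2 ^ q \<le> B ^ q"
    unfolding B_def power_mult_distrib[symmetric] using T q1 by (intro pow_add_ge) auto
  hence "N * (real q ^ q * T1 ^ q + T2 ^ q) \<le> exp (real q) * B ^ q"
    using N T by (intro mult_mono) auto
  also have "exp (real q) = exp 1 ^ q" using exp_of_nat_mult[of q 1] by simp
  hence "exp (real q) * B ^ q = C powr real q"
    using C0 by (simp add: powr_realpow C_def B_def[symmetric] exp_of_nat_mult[symmetric, of q 1] power_mult_distrib)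
  finally have hN: "N * (real q ^ q * T1 ^ q + T2 ^ q) \<le> C powr real q" .
  have "C powr (p - q) * (N * (real q ^ q * T1 ^ q + T2 ^ q)) \<le> C powr (p - q) * C powr real q"
    using hN by (intro mult_left_mono) auto
  also have "\<dots> = C powr p" by (simp add: powr_add[symmetric])
  finally have s1: "C powr p + C powr (p - q) * (N * (real q ^ q * T1 ^ q + T2 ^ q)) \<le> 2 * C powr p"
    by simp
  define m where "m = max (max p L * T1) T2"
  have m0: "m > 0" using T by (simp add: m_def)
  have "real q \<le> 2 * max p L" using q p by linarith
  hence "real q * T1 \<le> 2 * max p L * T1" using T by (intro mult_right_mono) auto
  hence Bm: "B \<le> 3 * m" unfolding B_def m_def by linarith
  have "C powr p \<le> (exp 1 * (3 * m)) powr p"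
    using C0 Bm p by (intro powr_mono2) (auto simp: C_def B_def[symmetric])
  also have "\<dots> = (3 * exp 1) powr p * m powr p" using m0 by (simp add: powr_mult)
  finally have s2: "C powr p \<le> (3 * exp 1) powr p * m powr p" .
  have "2 * (3 * exp 1) powr p \<le> 2 powr p * (3 * exp 1) powr p"
    using p by (intro mult_right_mono) (auto simp: powr_mono[of 1 p 2, simplified])
  also have "\<dots> = (6 * exp 1) powr p" by (simp add: powr_mult[symmetric])
  also have "\<dots> \<le> (24 * exp 1) powr p" using p by (intro powr_mono2) auto
  finally have s3: "2 * (3 * exp 1) powr p \<le> (24 * exp 1) powr p" .
  have mp: "m powr p \<le> (p * T1) powr p + (L * T1) powr p + T2 powr p"
  proof -
    have nn: "(p * T1) powr p \<ge> 0" "(L * T1) powr p \<ge> 0" "T2 powr p \<ge> 0" by auto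
    consider "m = p * T1" | "m = L * T1" | "m = T2" unfolding m_def max_def
      by (cases "p \<le> L"; cases "max p L * T1 \<le> T2") (auto simp: max_def)
    then show ?thesis using nn by cases auto
  qed
  have R: "(p powr p + L powr p + T2 powr p * T1 powr (-p)) * (24 * exp 1 * T1) powr p
      = (24 * exp 1) powr p * ((p * T1) powr p + (L * T1) powr p + T2 powr p)"
  proof -
    have "T2 powr p * T1 powr (-p) * T1 powr p = T2 powr p"
      using T by (simp add: powr_add[symmetric])
    moreover have "(24 * exp 1 * T1) powr p = (24 * exp 1) powr p * T1 powr p"
      using T by (simp add: powr_mult)
    moreover have "(p * T1) powr p = p powr p * T1 powr p" "(L * T1) powr p = L powr p * T1 powr p"
      using T p L by (simp_all add: powr_mult)
    ultimately show ?thesis by (simp add: algebra_simps)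
  qed
  have "2 * C powr p \<le> 2 * ((3 * exp 1) powr p * m powr p)" using s2 by simp
  also have "\<dots> \<le> (24 * exp 1) powr p * m powr p"
    using s3 by (simp add: mult.assoc[symmetric] mult_right_mono)
  also have "\<dots> \<le> (24 * exp 1) powr p * ((p * T1) powr p + (L * T1) powr p + T2 powr p)"
    using mp by (intro mult_left_mono) auto
  finally show ?thesis using s1 R by linarith
qed

theorem corollaryB3:
  fixes M :: "'a measure" and X :: "nat \<Rightarrow> 'a \<Rightarrow> real"
    and N :: nat and \<Theta>\<^sub>1 \<Theta>\<^sub>2 p :: real
  assumes "prob_space M"
    and "N \<ge> 2"
    and "\<And>i. i \<in> {1..N} \<Longrightarrow> X i \<in> borel_measurable M"
    and "\<And>i \<omega>. i \<in> {1..N} \<Longrightarrow> \<omega> \<in> space M \<Longrightarrow> X i \<omega> \<ge> 0"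
    and "\<Theta>\<^sub>1 > 0" and "\<Theta>\<^sub>2 > 0"
    and "\<And>i (q::nat). i \<in> {1..N} \<Longrightarrow> q \<ge> 1 \<Longrightarrow>
           (\<integral>\<^sup>+ \<omega>. ennreal (X i \<omega> ^ q) \<partial>M)
             \<le> ennreal (real q ^ q * \<Theta>\<^sub>1 ^ q + \<Theta>\<^sub>2 ^ q)"
    and "p \<ge> 1"
  shows "(\<integral>\<^sup>+ \<omega>. ennreal (MAX i\<in>{1..N}. X i \<omega> powr p) \<partial>M)
           \<le> ennreal ((p powr p + ln (real N) powr p + \<Theta>\<^sub>2 powr p * \<Theta>\<^sub>1 powr (-p))
                      * (24 * exp 1 * \<Theta>\<^sub>1) powr p)"
proof -
  interpret P: prob_space M by fact
  define L where "L = ln (real N)"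
  have L0: "L \<ge> 0" using assms(2) by (simp add: L_def)
  define q where "q = nat \<lceil>max p L\<rceil>"
  have q1: "real q \<ge> p" "real q \<ge> L" "real q \<le> max p L + 1"
    unfolding q_def using assms(8) by linarith+
  have qp: "p \<le> real q" using q1 by simp
  define C where "C = exp 1 * (real q * \<Theta>\<^sub>1 + \<Theta>\<^sub>2)"
  have C0: "C > 0" using assms(5,6) by (simp add: C_def add_nonneg_pos)
  have Nexp: "real N \<le> exp (real q)"
  proof -
    have "real N = exp L" using assms(2) by (simp add: L_def)
    also have "\<dots> \<le> exp (real q)" using q1 by simp
    finally show ?thesis .
  qed
  define Q where "Q = real q ^ q * \<Theta>\<^sub>1 ^ q + \<Theta>\<^sub>2 ^ q"
  have Q0: "Q \<ge> 0" using assms(5,6) by (simp add: Q_def)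
  have meas: "\<And>i. i \<in> {1..N} \<Longrightarrow> (\<lambda>\<omega>. ennreal (X i \<omega> ^ q)) \<in> borel_measurable M"
    using assms(3) by measurable
  have pt: "ennreal (MAX i\<in>{1..N}. X i \<omega> powr p)
      \<le> ennreal (C powr p) + ennreal (C powr (p - q)) * (\<Sum>i\<in>{1..N}. ennreal (X i \<omega> ^ q))"
    if \<omega>: "\<omega> \<in> space M" for \<omega>
  proof -
    have ne: "{1..N} \<noteq> {}" using assms(2) by simp
    obtain j where j: "j \<in> {1..N}" "(MAX i\<in>{1..N}. X i \<omega> powr p) = X j \<omega> powr p"
    proof -
      have "(MAX i\<in>{1..N}. X i \<omega> powr p) \<in> (\<lambda>i. X i \<omega> powr p) ` {1..N}"
        using ne by (intro Max_in) auto
      then show ?thesis using that by (metis (no_types, lifting) imageE)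
    qed
    have x0: "X j \<omega> \<ge> 0" using assms(4) j \<omega> by auto
    have "X j \<omega> powr p \<le> C powr p + C powr (p - q) * X j \<omega> ^ q"
      using pw[OF x0 C0 assms(8) qp] .
    also have "X j \<omega> ^ q \<le> (\<Sum>i\<in>{1..N}. X i \<omega> ^ q)"
      using j assms(4) \<omega> by (intro member_le_sum) auto
    hence "C powr (p - q) * X j \<omega> ^ q \<le> C powr (p - q) * (\<Sum>i\<in>{1..N}. X i \<omega> ^ q)"
      by (intro mult_left_mono) auto
    finally have "ennreal (MAX i\<in>{1..N}. X i \<omega> powr p)
        \<le> ennreal (C powr p + C powr (p - q) * (\<Sum>i\<in>{1..N}. X i \<omega> ^ q))"
      using j by (intro ennreal_leI) auto
    also have "\<dots> = ennreal (C powr p) + ennreal (C powr (p - q)) * (\<Sum>i\<in>{1..N}. ennreal (X i \<omega> ^ q))"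
    proof -
      have s0: "(\<Sum>i\<in>{1..N}. ennreal (X i \<omega> ^ q)) = ennreal (\<Sum>i\<in>{1..N}. X i \<omega> ^ q)"
        using assms(4) \<omega> by (intro sum_ennreal) auto
      have "0 \<le> (\<Sum>i\<in>{1..N}. X i \<omega> ^ q)"
        using assms(4) \<omega> by (intro sum_nonneg) auto
      then have "ennreal (C powr p + C powr (p - q) * (\<Sum>i\<in>{1..N}. X i \<omega> ^ q))
          = ennreal (C powr p) + ennreal (C powr (p - q)) * ennreal (\<Sum>i\<in>{1..N}. X i \<omega> ^ q)"
        by (simp only: ennreal_plus[of "C powr p" "C powr (p - q) * (\<Sum>i\<in>{1..N}. X i \<omega> ^ q)"]
             ennreal_mult[of "C powr (p - q)" "\<Sum>i\<in>{1..N}. X i \<omega> ^ q"] powr_ge_zero mult_nonneg_nonneg)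
      then show ?thesis unfolding s0 .
    qed
    finally show ?thesis .
  qed
  have "(\<integral>\<^sup>+ \<omega>. ennreal (MAX i\<in>{1..N}. X i \<omega> powr p) \<partial>M)
      \<le> (\<integral>\<^sup>+ \<omega>. ennreal (C powr p) + ennreal (C powr (p - q)) * (\<Sum>i\<in>{1..N}. ennreal (X i \<omega> ^ q)) \<partial>M)"
    using pt by (intro nn_integral_mono) auto
  also have "\<dots> = ennreal (C powr p) + ennreal (C powr (p - q)) * (\<Sum>i\<in>{1..N}. (\<integral>\<^sup>+ \<omega>. ennreal (X i \<omega> ^ q) \<partial>M))"
  proof -
    have hs: "(\<integral>\<^sup>+ \<omega>. (\<Sum>i\<in>{1..N}. ennreal (X i \<omega> ^ q)) \<partial>M)
        = (\<Sum>i\<in>{1..N}. (\<integral>\<^sup>+ \<omega>. ennreal (X i \<omega> ^ q) \<partial>M))"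
      by (rule nn_integral_sum) (use meas in auto)
    have ms: "(\<lambda>\<omega>. \<Sum>i\<in>{1..N}. ennreal (X i \<omega> ^ q)) \<in> borel_measurable M"
      using meas by (intro borel_measurable_sum) auto
    show ?thesis
    proof -
      have m2: "(\<lambda>\<omega>. ennreal (C powr (p - q)) * (\<Sum>i\<in>{1..N}. ennreal (X i \<omega> ^ q))) \<in> borel_measurable M"
        by (rule borel_measurable_times_ennreal[OF borel_measurable_const ms])
      have "(\<integral>\<^sup>+ \<omega>. ennreal (C powr p) + ennreal (C powr (p - q)) * (\<Sum>i\<in>{1..N}. ennreal (X i \<omega> ^ q)) \<partial>M)
        = (\<integral>\<^sup>+ \<omega>. ennreal (C powr p) \<partial>M) + (\<integral>\<^sup>+ \<omega>. ennreal (C powr (p - q)) * (\<Sum>i\<in>{1..N}. ennreal (X i \<omega> ^ q)) \<partial>M)"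
        by (rule nn_integral_add[OF _ m2]) simp
      also have "\<dots> = ennreal (C powr p) + ennreal (C powr (p - q)) * (\<integral>\<^sup>+ \<omega>. (\<Sum>i\<in>{1..N}. ennreal (X i \<omega> ^ q)) \<partial>M)"
        by (simp only: nn_integral_cmult[OF ms] nn_integral_const P.emeasure_space_1 mult_1_right)
      finally show ?thesis by (simp only: hs)
    qed
  qed
  also have "\<dots> \<le> ennreal (C powr p) + ennreal (C powr (p - q)) * (\<Sum>i\<in>{1..N}. ennreal Q)"
  proof -
    have q1n: "q \<ge> 1" using q1 assms(8) by linarith
    have "(\<Sum>i\<in>{1..N}. (\<integral>\<^sup>+ \<omega>. ennreal (X i \<omega> ^ q) \<partial>M)) \<le> (\<Sum>i\<in>{1..N}. ennreal Q)"
      by (rule sum_mono) (unfold Q_def, rule assms(7)[OF _ q1n], assumption)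
    then show ?thesis by (intro add_left_mono mult_left_mono) simp_all
  qed
  also have "\<dots> = ennreal (C powr p + C powr (p - q) * (real N * Q))"
    using Q0 by (simp add: ennreal_plus ennreal_mult ennreal_of_nat_eq_real_of_nat)
  also have "\<dots> \<le> ennreal ((p powr p + ln (real N) powr p + \<Theta>\<^sub>2 powr p * \<Theta>\<^sub>1 powr (-p))
                      * (24 * exp 1 * \<Theta>\<^sub>1) powr p)"
    unfolding C_def Q_def L_def[symmetric]
    by (intro ennreal_leI final assms(5,6,8) L0 q1(1) q1(3) Nexp) auto
  finally show ?thesis .
qed

end
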